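(* Let $A_n=1$ if $n=2^{k+1}-2$ for some integer $k\ge0$ and $A_n=0$ otherwise, let $D(n)=\det\left(A_{i+j}\right)_{i,j=0}^{n-1}$ for $n\ge1$, $D(0)=1$ (it is known that $D(n)\in\{1,-1\}$), and let $T_n=\frac{D(n)D(n+2)}{D(n+1)^2}=D(n)D(n+2)$ for $n\ge0$. Then $T_0=1$, $T_1=-1$, and $$T_{2n}=T_{2n-1}T_{n-1}\quad(n\ge1),\qquad T_{2n+1}=-T_{2n}\quad(n\ge0).$$ *)

theory Defs
  imports Complex_Main "Jordan_Normal_Form.Determinant"
begin

definition A :: "nat \<Rightarrow> int" where
  "A n = (if \<exists>k::nat. n = 2 ^ (k + 1) - 2 then 1 else 0)"

definition D :: "nat \<Rightarrow> int" where
  "D n = (if n = 0 then 1 else det (mat n n (\<lambda>(i, j). A (i + j))))"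

definition T :: "nat \<Rightarrow> real" where
  "T n = real_of_int (D n) * real_of_int (D (n + 2)) / (real_of_int (D (n + 1)))^2"

end

theory Submission
  imports Defs
begin

lemma signof_sq: "signof p * signof p = (1::int)"
  by (simp add: sign_def)

lemma det_perm_sim:
  fixes M :: "int mat"
  assumes M: "M \<in> carrier_mat n n" and p: "p permutes {0..<n}"
  shows "det (mat n n (\<lambda>(i,j). M $$ (p i, p j))) = det M"
proof -
  define B where "B = mat n n (\<lambda>(i,j). M $$ (i, p j))"
  have B: "B \<in> carrier_mat n n" unfolding B_def by simp
  have pl: "\<And>i. i < n \<Longrightarrow> p i < n" using p by (simp add: permutes_in_image)
  have 1: "mat n n (\<lambda>(i,j). M $$ (p i, p j)) = mat n n (\<lambda>(i,j). B $$ (p i, j))"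
    by (rule eq_matI) (auto simp: B_def pl)
  have 2: "B\<^sup>T = mat n n (\<lambda>(i,j). M\<^sup>T $$ (p i, j))"
    by (rule eq_matI) (use M in \<open>auto simp: B_def pl\<close>)
  have "det B = det (B\<^sup>T)" using det_transpose[OF B] by simp
  also have "\<dots> = signof p * det (M\<^sup>T)" unfolding 2 by (rule det_permute_rows[OF _ p]) (use M in auto)
  also have "\<dots> = signof p * det M" using det_transpose[OF M] by simp
  finally have "det B = signof p * det M" .
  then show ?thesis unfolding 1 det_permute_rows[OF B p]
    by (simp add: mult.assoc[symmetric] signof_sq)
qed

definition qperm :: "nat \<Rightarrow> nat \<Rightarrow> nat \<Rightarrow> nat" where
  "qperm h n k = (if k < h then 2*k else if k < n then 2*(k-h)+1 else k)"

lemma qperm_permutes: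
  assumes "h = (n+1) div 2"
  shows "qperm h n permutes {0..<n}"
proof (rule bij_imp_permutes)
  have sub: "qperm h n ` {0..<n} \<subseteq> {0..<n}"
    using assms by (auto simp: qperm_def)
  have inj: "inj_on (qperm h n) {0..<n}"
    unfolding inj_on_def qperm_def using assms by auto presburger+
  have "qperm h n ` {0..<n} = {0..<n}" by (rule endo_inj_surj[OF _ sub inj]) simp
  with inj show "bij_betw (qperm h n) {0..<n} {0..<n}" by (simp add: bij_betw_def)
  show "\<And>x. x \<notin> {0..<n} \<Longrightarrow> qperm h n x = x" using assms by (auto simp: qperm_def)
qed

lemma det_parity_split:
  fixes M :: "int mat"
  assumes M: "M \<in> carrier_mat n n"
    and z: "\<And>i j. i < n \<Longrightarrow> j < n \<Longrightarrow> odd (i+j) \<Longrightarrow> M $$ (i,j) = 0"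
  shows "det M = det (mat ((n+1) div 2) ((n+1) div 2) (\<lambda>(i,j). M $$ (2*i,2*j)))
              * det (mat (n div 2) (n div 2) (\<lambda>(i,j). M $$ (2*i+1,2*j+1)))"
proof -
  define h where "h = (n+1) div 2"
  define m where "m = n div 2"
  have nhm: "n = h + m" unfolding h_def m_def by simp
  define E where "E = mat h h (\<lambda>(i,j). M $$ (2*i,2*j))"
  define Od where "Od = mat m m (\<lambda>(i,j). M $$ (2*i+1,2*j+1))"
  have q: "qperm h n permutes {0..<n}" using qperm_permutes h_def by simp
  have "det M = det (mat n n (\<lambda>(i,j). M $$ (qperm h n i, qperm h n j)))"
    using det_perm_sim[OF M q] by simp
  also have "mat n n (\<lambda>(i,j). M $$ (qperm h n i, qperm h n j)) = four_block_mat E (0\<^sub>m h m) (0\<^sub>m m h) Od"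
  proof (rule eq_matI)
    fix i j assume i: "i < dim_row (four_block_mat E (0\<^sub>m h m) (0\<^sub>m m h) Od)"
      and j: "j < dim_col (four_block_mat E (0\<^sub>m h m) (0\<^sub>m m h) Od)"
    then have i': "i < n" and j': "j < n" by (auto simp: E_def Od_def nhm)
    have qi: "qperm h n i < n" "qperm h n j < n"
      using permutes_in_image[OF q] i' j' by auto
    show "mat n n (\<lambda>(i,j). M $$ (qperm h n i, qperm h n j)) $$ (i,j) = four_block_mat E (0\<^sub>m h m) (0\<^sub>m m h) Od $$ (i,j)"
      using i' j' qi
      by (auto simp: E_def Od_def nhm qperm_def intro!: z)
  qed (auto simp: E_def Od_def nhm)
  also have "det (four_block_mat E (0\<^sub>m h m) (0\<^sub>m m h) Od) = det E * det Od"
    by (rule det_four_block_mat_lower_left_zero) (auto simp: E_def Od_def)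
  finally show ?thesis unfolding E_def Od_def h_def m_def .
qed

lemma det_antiparity_even:
  fixes M :: "int mat"
  assumes M: "M \<in> carrier_mat (2*p) (2*p)"
    and z: "\<And>i j. i < 2*p \<Longrightarrow> j < 2*p \<Longrightarrow> even (i+j) \<Longrightarrow> M $$ (i,j) = 0"
  shows "det M = (-1)^(p*p) * det (mat p p (\<lambda>(i,j). M $$ (2*i,2*j+1)))
              * det (mat p p (\<lambda>(i,j). M $$ (2*i+1,2*j)))"
proof -
  define n where "n = 2*p"
  have h: "p = (n+1) div 2" unfolding n_def by simp
  have np: "n = p + p" unfolding n_def by simp
  define X where "X = mat p p (\<lambda>(i,j). M $$ (2*i,2*j+1))"
  define Y where "Y = mat p p (\<lambda>(i,j). M $$ (2*i+1,2*j))"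
  have q: "qperm p n permutes {0..<n}" using qperm_permutes h by simp
  have M': "M \<in> carrier_mat n n" using M n_def by simp
  define B where "B = mat n n (\<lambda>(i,j). M $$ (qperm p n i, qperm p n j))"
  have B: "B \<in> carrier_mat (p+p) (p+p)" unfolding B_def np by simp
  have "det M = det B"
    using det_perm_sim[OF M' q] unfolding B_def by simp
  also have "\<dots> = (-1)^(p*p) * det (mat (p + p) (p + p) (\<lambda> (i,j). 
   B $$ (i,(if j < p then j + p else j - p))))" by (rule det_swap_cols[OF B])
  also have "mat (p + p) (p + p) (\<lambda> (i,j). B $$ (i,(if j < p then j + p else j - p)))
     = four_block_mat X (0\<^sub>m p p) (0\<^sub>m p p) Y"
  proof (rule eq_matI)
    fix i j assume i: "i < dim_row (four_block_mat X (0\<^sub>m p p) (0\<^sub>m p p) Y)"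
      and j: "j < dim_col (four_block_mat X (0\<^sub>m p p) (0\<^sub>m p p) Y)"
    then have i': "i < n" and j': "j < n" by (auto simp: X_def Y_def np)
    define j2 where "j2 = (if j < p then j + p else j - p)"
    have j2: "j2 < n" using j' np j2_def by auto
    have qi: "qperm p n i < n" "qperm p n j2 < n"
      using permutes_in_image[OF q] i' j2 by auto
    have "mat (p + p) (p + p) (\<lambda> (i,j). B $$ (i,(if j < p then j + p else j - p))) $$ (i,j)
      = M $$ (qperm p n i, qperm p n j2)" using i' j' j2 unfolding B_def j2_def np by auto
    also have "\<dots> = four_block_mat X (0\<^sub>m p p) (0\<^sub>m p p) Y $$ (i,j)"
      using i' j' qi j2 unfolding j2_def
      by (auto simp: X_def Y_def np qperm_def intro!: z)
    finally show "mat (p + p) (p + p) (\<lambda> (i,j). B $$ (i,(if j < p then j + p else j - p))) $$ (i,j)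
      = four_block_mat X (0\<^sub>m p p) (0\<^sub>m p p) Y $$ (i,j)" .
  qed (auto simp: X_def Y_def)
  also have "det (four_block_mat X (0\<^sub>m p p) (0\<^sub>m p p) Y) = det X * det Y"
    by (rule det_four_block_mat_lower_left_zero) (auto simp: X_def Y_def)
  finally show ?thesis unfolding X_def Y_def by simp
qed

lemma sum_odd_parity:
  fixes f :: "nat \<Rightarrow> nat"
  shows "(\<forall>i<n. odd (f i)) \<Longrightarrow> (even (\<Sum>i<n. f i) \<longleftrightarrow> even n)"
  by (induction n) auto

lemma det_antiparity_odd:
  fixes M :: "int mat"
  assumes M: "M \<in> carrier_mat n n" and n: "odd n"
    and z: "\<And>i j. i < n \<Longrightarrow> j < n \<Longrightarrow> even (i+j) \<Longrightarrow> M $$ (i,j) = 0"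
  shows "det M = 0"
proof -
  have "det M = (\<Sum> p \<in> {p. p permutes {0 ..< n}}. signof p * (\<Prod> i = 0 ..< n. M $$ (i, p i)))"
    by (rule det_def'[OF M])
  also have "\<dots> = 0"
  proof (rule sum.neutral, intro ballI)
    fix p assume "p \<in> {p. p permutes {0 ..< n}}"
    then have p: "p permutes {0..<n}" by simp
    have "\<exists>i<n. even (i + p i)"
    proof (rule ccontr)
      assume "\<not> ?thesis"
      then have all: "\<forall>i<n. odd (i + p i)" by auto
      have "(\<Sum>i<n. i + p i) = (\<Sum>i<n. i) + (\<Sum>i<n. p i)" by (simp add: sum.distrib)
      also have "(\<Sum>i<n. p i) = (\<Sum>i<n. i)"
        using sum.permute[OF p, of "\<lambda>i. i"] by (simp add: lessThan_atLeast0 comp_def)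
      finally have "even (\<Sum>i<n. i + p i)" by simp
      with sum_odd_parity[OF all] n show False by simp
    qed
    then obtain i where i: "i < n" "even (i + p i)" by auto
    have "p i < n" using permutes_in_image[OF p] i by simp
    then have "M $$ (i, p i) = 0" using z i by simp
    then have "(\<Prod> i = 0 ..< n. M $$ (i, p i)) = 0"
      using i by (intro prod_zero) auto
    then show "signof p * (\<Prod> i = 0 ..< n. M $$ (i, p i)) = 0" by simp
  qed
  finally show ?thesis .
qed

definition gA :: "nat \<Rightarrow> int" where "gA k = (if k = 0 then 1 else A (k-1))"
definition cA :: "nat \<Rightarrow> int" where "cA k = (if k = 0 then 0 else gA k)"
definition hk :: "(nat \<Rightarrow> int) \<Rightarrow> nat \<Rightarrow> nat \<Rightarrow> int mat" where
  "hk f s m = mat m m (\<lambda>(i,j). f (i+j+s))"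

lemma hk_carrier[simp]: "hk f s m \<in> carrier_mat m m" by (simp add: hk_def)

lemma A_odd: "A (2*k+1) = 0"
proof -
  have "2*k+1 \<noteq> 2^(j+1) - 2" for j :: nat
  proof -
    have "(2::nat)^(j+1) - 2 = 2*(2^j - 1)" by (simp add: algebra_simps)
    then show ?thesis by presburger
  qed
  then show ?thesis unfolding A_def by auto
qed

lemma A_even2: "A (2*k+2) = A k"
proof -
  have "(\<exists>j::nat. 2*k+2 = 2^(j+1) - 2) \<longleftrightarrow> (\<exists>j::nat. k = 2^(j+1) - 2)"
  proof
    assume "\<exists>j::nat. 2*k+2 = 2^(j+1) - 2"
    then obtain j :: nat where j: "2*k+2 = 2^(j+1) - 2" by auto
    show "\<exists>j::nat. k = 2^(j+1) - 2"
    proof (cases j)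
      case 0 then show ?thesis using j by simp
    next
      case (Suc i)
      have "(2::nat)^(i+1) \<ge> 2" by (metis add_gr_0 le_add2 one_le_numeral power_increasing power_one_right zero_less_one)
      then have "k = 2^(i+1) - 2" using j Suc by simp
      then show ?thesis by blast
    qed
  next
    assume "\<exists>j::nat. k = 2^(j+1) - 2"
    then obtain j :: nat where j: "k = 2^(j+1) - 2" by auto
    have x: "(1::nat) \<le> 2^j" by simp
    have y: "2^(Suc j + 1) = 4*(2::nat)^j" "2^(j + 1) = 2*(2::nat)^j" by simp_all
    have "2*k+2 = 2^(Suc j+1) - 2" using j x unfolding y by linarith
    then show "\<exists>j::nat. 2*k+2 = 2^(j+1) - 2" by blast
  qed
  then show ?thesis unfolding A_def by simp
qed

lemma A_even: "A (2*k) = gA k"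
proof (cases k)
  case 0
  have "A 0 = 1" unfolding A_def using exI[of "\<lambda>k. (0::nat) = 2^(k+1) - 2" 0] by simp
  then show ?thesis using 0 by (simp add: gA_def)
next
  case (Suc i)
  then have "2*k = 2*i+2" by simp
  then show ?thesis using Suc A_even2 by (simp add: gA_def)
qed

lemma g_odd: "gA (2*k+1) = gA k" using A_even by (simp add: gA_def)
lemma g_even: "gA (2*k+2) = 0" using A_odd by (simp add: gA_def)
lemma c_even: "cA (2*k) = 0"
  using g_even[of "k-1"] by (cases k) (auto simp: cA_def)
lemma c_odd: "cA (2*k+1) = gA k" using g_odd by (simp add: cA_def)

lemma c_odd': "m = 2*k+1 \<Longrightarrow> cA m = gA k" using c_odd by simp
lemma g_odd': "m = 2*k+1 \<Longrightarrow> gA m = gA k" using g_odd by simp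
lemma g_zero: "i + j + 1 = 2 * k + 2 \<Longrightarrow> gA (i+j+1) = 0" using g_even by simp

lemma D_hk: "D n = det (hk A 0 n)"
  by (cases "n = 0") (auto simp: D_def hk_def)

lemma D_rec: "D n = det (hk gA 0 ((n+1) div 2)) * D (n div 2)"
proof -
  have "det (hk A 0 n) = det (mat ((n+1) div 2) ((n+1) div 2) (\<lambda>(i,j). hk A 0 n $$ (2*i,2*j)))
              * det (mat (n div 2) (n div 2) (\<lambda>(i,j). hk A 0 n $$ (2*i+1,2*j+1)))"
  proof (rule det_parity_split)
    fix i j assume "i < n" "j < n" "odd (i+j)"
    then obtain k where "i+j = 2*k+1" by (metis oddE)
    then show "hk A 0 n $$ (i,j) = 0" using \<open>i<n\<close> \<open>j<n\<close> A_odd by (simp add: hk_def)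
  qed simp
  also have "mat ((n+1) div 2) ((n+1) div 2) (\<lambda>(i,j). hk A 0 n $$ (2*i,2*j)) = hk gA 0 ((n+1) div 2)"
  proof (rule eq_matI)
    fix i j assume "i < dim_row (hk gA 0 ((n+1) div 2))" "j < dim_col (hk gA 0 ((n+1) div 2))"
    then have "2*i < n" "2*j < n" by (auto simp: hk_def)
    moreover have "2*i+2*j = 2*(i+j)" by simp
    ultimately show "mat ((n+1) div 2) ((n+1) div 2) (\<lambda>(i,j). hk A 0 n $$ (2*i,2*j)) $$ (i,j) = hk gA 0 ((n+1) div 2) $$ (i,j)"
      using \<open>i < dim_row _\<close> \<open>j < dim_col _\<close> by (simp add: hk_def A_even[of "i+j", unfolded distrib_left])
  qed (auto simp: hk_def)
  also have "mat (n div 2) (n div 2) (\<lambda>(i,j). hk A 0 n $$ (2*i+1,2*j+1)) = hk A 0 (n div 2)"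
  proof (rule eq_matI)
    fix i j assume "i < dim_row (hk A 0 (n div 2))" "j < dim_col (hk A 0 (n div 2))"
    then have "2*i+1 < n" "2*j+1 < n" "i < n div 2" "j < n div 2" by (auto simp: hk_def)
    moreover have "2*i+1+(2*j+1) = 2*(i+j)+2" by simp
    ultimately show "mat (n div 2) (n div 2) (\<lambda>(i,j). hk A 0 n $$ (2*i+1,2*j+1)) $$ (i,j) = hk A 0 (n div 2) $$ (i,j)"
      using A_even2[of "i+j"] by (simp add: hk_def distrib_left)
  qed (auto simp: hk_def)
  finally show ?thesis using D_hk by simp
qed

lemma laplace_g:
  "det (hk gA 0 (Suc k)) = det (hk cA 0 (Suc k)) + det (hk cA 2 k)"
proof -
  define H where "H = hk gA 0 (Suc k)"
  define C where "C = hk cA 0 (Suc k)"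
  have H: "H \<in> carrier_mat (Suc k) (Suc k)" and C: "C \<in> carrier_mat (Suc k) (Suc k)"
    unfolding H_def C_def by simp_all
  have cof: "cofactor H 0 j = cofactor C 0 j" for j
  proof -
    have "mat_delete H 0 j = mat_delete C 0 j"
      by (rule eq_matI) (auto simp: mat_delete_def H_def C_def hk_def cA_def)
    then show ?thesis unfolding cofactor_def by simp
  qed
  have "det H = (\<Sum>j<Suc k. H $$ (0,j) * cofactor H 0 j)"
    by (rule laplace_expansion_row[OF H]) simp
  also have "\<dots> = (\<Sum>j<Suc k. C $$ (0,j) * cofactor C 0 j + (if j = 0 then cofactor C 0 0 else 0))"
  proof (rule sum.cong)
    fix j assume "j \<in> {..<Suc k}"
    then have entry: "H $$ (0,j) = C $$ (0,j) + (if j = 0 then 1 else 0)"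
      by (auto simp: H_def C_def hk_def cA_def gA_def)
    show "H $$ (0,j) * cofactor H 0 j = C $$ (0,j) * cofactor C 0 j + (if j = 0 then cofactor C 0 0 else 0)"
      unfolding entry cof by (simp add: algebra_simps)
  qed simp
  also have "\<dots> = det C + cofactor C 0 0"
    using laplace_expansion_row[OF C, of 0] by (simp add: sum.distrib del: sum.lessThan_Suc)
  also have "cofactor C 0 0 = det (hk cA 2 k)"
  proof -
    have "mat_delete C 0 0 = hk cA 2 k"
      by (rule eq_matI) (auto simp: mat_delete_def C_def hk_def)
    then show ?thesis unfolding cofactor_def by simp
  qed
  finally show ?thesis unfolding H_def C_def .
qed

lemma c_zero: "even m \<Longrightarrow> cA m = 0"
  using c_even by (metis evenE)

lemma hk_cA_odd: "odd n \<Longrightarrow> det (hk cA s n) = 0" if "even s"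
proof -
  assume n: "odd n"
  show ?thesis
    by (rule det_antiparity_odd[OF hk_carrier n]) (use that in \<open>auto simp: hk_def intro!: c_zero\<close>)
qed

lemma hk_cA_even:
  assumes "even s"
  shows "det (hk cA s (2*p)) = (-1)^(p*p) * det (hk gA (s div 2) p)^2"
proof -
  have "det (hk cA s (2*p)) = (-1)^(p*p) * det (mat p p (\<lambda>(i,j). hk cA s (2*p) $$ (2*i,2*j+1)))
              * det (mat p p (\<lambda>(i,j). hk cA s (2*p) $$ (2*i+1,2*j)))"
    by (rule det_antiparity_even[OF hk_carrier]) (use assms in \<open>auto simp: hk_def intro!: c_zero\<close>)
  also have "mat p p (\<lambda>(i,j). hk cA s (2*p) $$ (2*i,2*j+1)) = hk gA (s div 2) p"
  proof (rule eq_matI)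
    fix i j assume ij: "i < dim_row (hk gA (s div 2) p)" "j < dim_col (hk gA (s div 2) p)"
    have e: "2*i+(2*j+1)+s = 2*(i+j+s div 2)+1" using assms by simp
    show "mat p p (\<lambda>(i,j). hk cA s (2*p) $$ (2*i,2*j+1)) $$ (i,j) = hk gA (s div 2) p $$ (i,j)"
      using ij assms by (simp add: hk_def) (rule c_odd', presburger)
  qed (auto simp: hk_def)
  also have "mat p p (\<lambda>(i,j). hk cA s (2*p) $$ (2*i+1,2*j)) = hk gA (s div 2) p"
  proof (rule eq_matI)
    fix i j assume ij: "i < dim_row (hk gA (s div 2) p)" "j < dim_col (hk gA (s div 2) p)"
    have e: "2*i+1+(2*j)+s = 2*(i+j+s div 2)+1" using assms by simp
    show "mat p p (\<lambda>(i,j). hk cA s (2*p) $$ (2*i+1,2*j)) $$ (i,j) = hk gA (s div 2) p $$ (i,j)"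
      using ij assms by (simp add: hk_def) (rule c_odd', presburger)
  qed (auto simp: hk_def)
  finally show ?thesis by (simp add: power2_eq_square)
qed

lemma E_even: "p \<ge> 1 \<Longrightarrow> det (hk gA 0 (2*p)) = (-1)^(p*p) * det (hk gA 0 p)^2"
proof -
  assume p: "p \<ge> 1"
  then have s: "2*p = Suc (2*p-1)" by simp
  have "det (hk gA 0 (2*p)) = det (hk cA 0 (2*p)) + det (hk cA 2 (2*p-1))"
    using laplace_g[of "2*p-1"] unfolding s[symmetric] .
  moreover have "det (hk cA 2 (2*p-1)) = 0" using p by (intro hk_cA_odd) auto
  moreover have "det (hk cA 0 (2*p)) = (-1)^(p*p) * det (hk gA 0 p)^2"
    using hk_cA_even[of 0 p] by simp
  ultimately show ?thesis by simp
qed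

lemma E_odd: "det (hk gA 0 (2*p+1)) = (-1)^(p*p) * det (hk gA 1 p)^2"
proof -
  have "det (hk gA 0 (2*p+1)) = det (hk cA 0 (2*p+1)) + det (hk cA 2 (2*p))"
    using laplace_g[of "2*p"] by simp
  moreover have "det (hk cA 0 (2*p+1)) = 0" by (intro hk_cA_odd) auto
  moreover have "det (hk cA 2 (2*p)) = (-1)^(p*p) * det (hk gA 1 p)^2"
    using hk_cA_even[of 2 p] by simp
  ultimately show ?thesis by simp
qed

lemma F_rec: "det (hk gA 1 p) = det (hk gA 0 ((p+1) div 2)) * det (hk gA 1 (p div 2))"
proof -
  have "det (hk gA 1 p) = det (mat ((p+1) div 2) ((p+1) div 2) (\<lambda>(i,j). hk gA 1 p $$ (2*i,2*j)))
              * det (mat (p div 2) (p div 2) (\<lambda>(i,j). hk gA 1 p $$ (2*i+1,2*j+1)))"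
  proof (rule det_parity_split)
    fix i j assume "i < p" "j < p" "odd (i+j)"
    then obtain k where "i+j = 2*k+1" by (metis oddE)
    then have "i+j+1 = 2*k+2" by simp
    then show "hk gA 1 p $$ (i,j) = 0" using \<open>i<p\<close> \<open>j<p\<close> g_even by (simp add: hk_def)
  qed simp
  also have "mat ((p+1) div 2) ((p+1) div 2) (\<lambda>(i,j). hk gA 1 p $$ (2*i,2*j)) = hk gA 0 ((p+1) div 2)"
  proof (rule eq_matI)
    fix i j assume ij: "i < dim_row (hk gA 0 ((p+1) div 2))" "j < dim_col (hk gA 0 ((p+1) div 2))"
    then have "2*i < p" "2*j < p" by (auto simp: hk_def)
    moreover have e: "2*i+2*j+1 = 2*(i+j)+1" by simp
    ultimately show "mat ((p+1) div 2) ((p+1) div 2) (\<lambda>(i,j). hk gA 1 p $$ (2*i,2*j)) $$ (i,j) = hk gA 0 ((p+1) div 2) $$ (i,j)"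
      using ij by (simp add: hk_def) (rule g_odd', presburger)
  qed (auto simp: hk_def)
  also have "mat (p div 2) (p div 2) (\<lambda>(i,j). hk gA 1 p $$ (2*i+1,2*j+1)) = hk gA 1 (p div 2)"
  proof (rule eq_matI)
    fix i j assume ij: "i < dim_row (hk gA 1 (p div 2))" "j < dim_col (hk gA 1 (p div 2))"
    then have "2*i+1 < p" "2*j+1 < p" by (auto simp: hk_def)
    moreover have e: "2*i+1+(2*j+1)+1 = 2*(i+j+1)+1" by simp
    ultimately show "mat (p div 2) (p div 2) (\<lambda>(i,j). hk gA 1 p $$ (2*i+1,2*j+1)) $$ (i,j) = hk gA 1 (p div 2) $$ (i,j)"
      using ij by (simp add: hk_def) (rule g_odd', presburger)
  qed (auto simp: hk_def)
  finally show ?thesis .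
qed

lemma neg1_pow_sq: "((-1::int)^k)^2 = 1"
  by (simp add: power_mult[symmetric] power_mult_distrib)

lemma neg1_pp: "(-1::int)^(p*p) = (-1)^p"
  by (cases "even p") (simp_all add: neg_one_even_power neg_one_odd_power)

lemma EF: "det (hk gA 0 m) = (-1)^(m div 2) \<and> det (hk gA 1 m)^2 = 1"
proof (induction m rule: less_induct)
  case (less m)
  have Em: "det (hk gA 0 m) = (-1)^(m div 2)"
  proof (cases "m = 0")
    case True then show ?thesis by (simp add: hk_def)
  next
    case False
    obtain p where "m = 2*p \<or> m = 2*p+1" by (metis oddE evenE)
    then show ?thesis
    proof
      assume m: "m = 2*p"
      with False have p: "p \<ge> 1" "p < m" by auto
      have "det (hk gA 0 p) = (-1)^(p div 2)" using less p by blast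
      then show ?thesis using E_even[OF p(1)] m by (simp add: neg1_pow_sq neg1_pp)
    next
      assume m: "m = 2*p+1"
      then have p: "p < m" by simp
      have "det (hk gA 1 p)^2 = 1" using less p by blast
      then show ?thesis using E_odd[of p] m by (simp add: neg1_pp)
    qed
  qed
  have Fm: "det (hk gA 1 m)^2 = 1"
  proof (cases "m = 0")
    case True then show ?thesis by (simp add: hk_def)
  next
    case False
    have h: "(m+1) div 2 \<le> m" by simp
    have Eh: "det (hk gA 0 ((m+1) div 2)) = (-1)^(((m+1) div 2) div 2)"
    proof (cases "(m+1) div 2 = m")
      case True then show ?thesis using Em by simp
    next
      case False then have "(m+1) div 2 < m" using h by simp
      then show ?thesis using less by blast
    qed
    have "det (hk gA 1 (m div 2))^2 = 1" using less False by simp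
    then show ?thesis unfolding F_rec[of m] using Eh by (simp add: power_mult_distrib neg1_pow_sq)
  qed
  show ?case using Em Fm by simp
qed

lemma E_val: "det (hk gA 0 m) = (-1)^(m div 2)" using EF by simp

lemma D_rec': "D n = (-1)^(((n+1) div 2) div 2) * D (n div 2)"
  using D_rec[of n] E_val by simp

lemma D_sq: "D n ^2 = 1"
proof (induction n rule: less_induct)
  case (less n)
  show ?case
  proof (cases "n = 0")
    case True then show ?thesis by (simp add: D_def)
  next
    case False
    then have "D (n div 2)^2 = 1" using less by simp
    then show ?thesis using D_rec'[of n] by (simp add: power_mult_distrib neg1_pow_sq)
  qed
qed

lemma D_even: "D (2*k) = (-1)^(k div 2) * D k"
proof -
  have "(2*k+1) div 2 = k" "2*k div 2 = k" by simp_all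
  then show ?thesis using D_rec'[of "2*k"] by simp
qed

lemma D_odd: "D (2*k+1) = (-1)^((k+1) div 2) * D k"
proof -
  have "(2*k+1+1) div 2 = k+1" "(2*k+1) div 2 = k" by simp_all
  then show ?thesis using D_rec'[of "2*k+1"] by simp
qed

lemma T_eq: "T n = real_of_int (D n * D (n+2))"
proof -
  have "real_of_int (D (n+1)) ^ 2 = 1" using D_sq[of "n+1"]
    by (metis of_int_eq_1_iff of_int_power)
  then show ?thesis unfolding T_def by simp
qed

lemma sgn_shift: "(-1::int)^((n+2) div 2) = - ((-1)^(n div 2))"
proof -
  have "(n+2) div 2 = n div 2 + 1" by simp
  then show ?thesis by simp
qed

theorem theorem2p6:
  shows "T 0 = 1 \<and> T 1 = -1 \<and>
         (\<forall>n::nat. n \<ge> 1 \<longrightarrow> T (2 * n) = T (2 * n - 1) * T (n - 1)) \<and>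
         (\<forall>n::nat. T (2 * n + 1) = - T (2 * n))"
proof (intro conjI allI impI)
  have D0: "D 0 = 1" by (simp add: D_def)
  have D1: "D 1 = 1" using D_odd[of 0] D0 by simp
  have D2: "D 2 = 1" using D_even[of 1] D1 by simp
  have D3: "D 3 = -1" using D_odd[of 1] D1 by simp
  show "T 0 = 1" using D0 D2 by (simp add: T_eq numeral_2_eq_2)
  show "T 1 = -1" using D1 D3 by (simp add: T_eq numeral_3_eq_3)
next
  fix n :: nat assume "n \<ge> 1"
  then obtain k where k: "n = k+1" by (metis le_add_diff_inverse2)
  have a: "2*n = 2*(k+1)" "2*n+2 = 2*(k+2)" "2*n-1 = 2*k+1" "2*n-1+2 = 2*(k+1)+1" "n-1 = k"
    using k by simp_all
  have "D (2*n) * D (2*n+2) = (D (2*n-1) * D (2*n-1+2)) * (D (n-1) * D (n-1+2))"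
  proof -
    have sq: "D k * D k = 1" using D_sq[of k] by (simp add: power2_eq_square)
    have "D (2*(k+1)) * D (2*(k+2)) = (-1)^((k+1) div 2) * D (k+1) * ((-1)^((k+2) div 2) * D (k+2))"
      using D_even[of "k+1"] D_even[of "k+2"] by simp
    also have "\<dots> = ((-1)^((k+1) div 2) * D k * ((-1)^((k+2) div 2) * D (k+1))) * (D k * D (k+2))"
      using sq by (simp add: algebra_simps)
    also have "\<dots> = (D (2*k+1) * D (2*(k+1)+1)) * (D k * D (k+2))"
      using D_odd[of k] D_odd[of "k+1"] by (simp add: add.commute)
    finally show ?thesis unfolding a by simp
  qed
  then show "T (2 * n) = T (2 * n - 1) * T (n - 1)" unfolding T_eq
    by (metis of_int_mult)
next
  fix n :: nat
  have "D (2*n+1) * D (2*n+1+2) = - (D (2*n) * D (2*n+2))"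
  proof -
    have a: "2*n+1+2 = 2*(n+1)+1" "2*n+2 = 2*(n+1)" by simp_all
    have "D (2*n+1) * D (2*(n+1)+1) = (-1)^((n+1) div 2) * D n * ((-1)^((n+2) div 2) * D (n+1))"
      using D_odd[of n] D_odd[of "n+1"] by (simp add: add.commute)
    also have "\<dots> = - ((-1)^(n div 2) * D n * ((-1)^((n+1) div 2) * D (n+1)))"
      unfolding sgn_shift by (simp add: algebra_simps)
    also have "\<dots> = - (D (2*n) * D (2*(n+1)))"
      using D_even[of n] D_even[of "n+1"] by simp
    finally show ?thesis unfolding a .
  qed
  then show "T (2 * n + 1) = - T (2 * n)" unfolding T_eq
    by (metis of_int_minus of_int_mult)
qed

end
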